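(* Consider the two-player, three-item all-pay auction with budgets described in the context, with symmetric valuations $v_{1j}=v_{2j}=v_j$ for $j\in\{1,2,3\}$, where $v_1\ge v_2\ge v_3$. Suppose $B_i\ge\max\{\frac{v_1+v_2+v_3}{2},v_1\}$ for all $i\in\{1,2\}$. Let $z=\frac{v_1+v_2+v_3}{2}$. Case 1: $z>v_1$. Let $A=(v_1,0,z-v_1)$, $B=(z-v_2,v_2,0)$, $C=(0,z-v_3,v_3)$, let $L_{AB},L_{BC},L_{CA}$ be the line segments with the indicated endpoints and $|AB|,|BC|,|CA|$ their lengths. Let $K=\frac{z-v_3}{z-v_2}+1+\frac{z-v_3}{z-v_1}$ and $P_{AB}=\frac1K\cdot\frac{z-v_3}{z-v_2}$, $P_{BC}=\frac1K$, $P_{CA}=\frac1K\cdot\frac{z-v_3}{z-v_1}$. For each player $i\in\{1,2\}$ let $f_i(x_{i1},x_{i2},x_{i3})$ equal $\frac{P_{AB}}{|AB|}$ on $L_{AB}$, $\frac{P_{BC}}{|BC|}$ on $L_{BC}$, and $\frac{P_{CA}}{|CA|}$ on $L_{CA}$. Then $(f_1,f_2)$ forms a Nash equilibrium. Case 2: $z\le v_1$. Let $A=(v_1,0,0)$ and $B=(0,v_2,v_3)$, and for each $i\in\{1,2\}$ let $f_i(x_{i1},x_{i2},x_{i3})=\frac{1}{|AB|}$ be the uniform density on the segment $AB$ (of length $|AB|$). Then $(f_1,f_2)$ forms a Nash equilibrium.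
   Context: Multi-item all-pay auction with budgets. Two players $i\in\{1,2\}$ ($-i$ is the opponent of $i$) and $n$ items $j\in\{1,\dots,n\}$. Player $i$ has budget $B_i\ge0$ and values item $j$ at $v_{ij}>0$. A pure strategy of player $i$ is a vector $(x_{i1},\dots,x_{in})$ with all $x_{ij}\ge0$ and $\sum_j x_{ij}\le B_i$; a mixed strategy is a probability distribution over this set. On each item $j$ the higher bid wins the item. Tie-breaking on item $j$: if $x_{1j}=x_{2j}=\min\{B_1,B_2,v_{1j},v_{2j}\}$ and $\min\{B_i,v_{ij}\}>\min\{B_{-i},v_{-ij}\}$ for some $i$, then player $i$ wins item $j$; in all other ties each player wins item $j$ with probability $\frac12$. Player $i$'s utility on item $j$ is $v_{ij}-x_{ij}$ if he wins it and $-x_{ij}$ otherwise, and his total utility is the sum over items. A Nash equilibrium is a pair of mixed strategies in which each player's strategy maximizes his expected total utility against the other's, over all mixed strategies satisfying his budget constraint. Here $n=3$. Mixed strategies are specified by densities supported on finitely many line segments in $\mathbb{R}^3$; such a density is with respect to arc length (one-dimensional length measure) on the indicated segment, so the probability of a segment is the density times its length. *)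

theory Defs
  imports "HOL-Probability.Probability"
begin

type_synonym bid = "real ^ 3"

text \<open>Probability that player 1 wins an item, given budgets B1 B2, the two valuations
  w1 w2 of the item and the two bids a (player 1) and b (player 2), with the
  tie-breaking rule of the paper. Player 2 wins with the complementary probability.\<close>
definition win1 :: "real \<Rightarrow> real \<Rightarrow> real \<Rightarrow> real \<Rightarrow> real \<Rightarrow> real \<Rightarrow> real" where
  "win1 B1 B2 w1 w2 a b =
     (if a > b then 1
      else if a < b then 0
      else if a = min (min B1 B2) (min w1 w2) \<and> min B1 w1 > min B2 w2 then 1
      else if a = min (min B1 B2) (min w1 w2) \<and> min B2 w2 > min B1 w1 then 0
      else 1/2)"

definition util1 :: "real \<Rightarrow> real \<Rightarrow> bid \<Rightarrow> bid \<Rightarrow> bid \<Rightarrow> bid \<Rightarrow> real" where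
  "util1 B1 B2 v1 v2 x y =
     (\<Sum>j\<in>UNIV. v1$j * win1 B1 B2 (v1$j) (v2$j) (x$j) (y$j) - x$j)"

definition util2 :: "real \<Rightarrow> real \<Rightarrow> bid \<Rightarrow> bid \<Rightarrow> bid \<Rightarrow> bid \<Rightarrow> real" where
  "util2 B1 B2 v1 v2 x y =
     (\<Sum>j\<in>UNIV. v2$j * (1 - win1 B1 B2 (v1$j) (v2$j) (x$j) (y$j)) - y$j)"

definition feasible :: "real \<Rightarrow> bid set" where
  "feasible B = {x. (\<forall>j. 0 \<le> x$j) \<and> (\<Sum>j\<in>UNIV. x$j) \<le> B}"

definition mixed_strategy :: "real \<Rightarrow> bid measure \<Rightarrow> bool" where
  "mixed_strategy B M \<longleftrightarrow> prob_space M \<and> sets M = sets borel \<and> (AE x in M. x \<in> feasible B)"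

definition EU1 :: "real \<Rightarrow> real \<Rightarrow> bid \<Rightarrow> bid \<Rightarrow> bid measure \<Rightarrow> bid measure \<Rightarrow> real" where
  "EU1 B1 B2 v1 v2 M1 M2 = (\<integral>p. util1 B1 B2 v1 v2 (fst p) (snd p) \<partial>(M1 \<Otimes>\<^sub>M M2))"

definition EU2 :: "real \<Rightarrow> real \<Rightarrow> bid \<Rightarrow> bid \<Rightarrow> bid measure \<Rightarrow> bid measure \<Rightarrow> real" where
  "EU2 B1 B2 v1 v2 M1 M2 = (\<integral>p. util2 B1 B2 v1 v2 (fst p) (snd p) \<partial>(M1 \<Otimes>\<^sub>M M2))"

definition nash_eq :: "real \<Rightarrow> real \<Rightarrow> bid \<Rightarrow> bid \<Rightarrow> bid measure \<Rightarrow> bid measure \<Rightarrow> bool" where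
  "nash_eq B1 B2 v1 v2 M1 M2 \<longleftrightarrow>
     mixed_strategy B1 M1 \<and> mixed_strategy B2 M2 \<and>
     (\<forall>M. mixed_strategy B1 M \<longrightarrow> EU1 B1 B2 v1 v2 M M2 \<le> EU1 B1 B2 v1 v2 M1 M2) \<and>
     (\<forall>M. mixed_strategy B2 M \<longrightarrow> EU2 B1 B2 v1 v2 M1 M \<le> EU2 B1 B2 v1 v2 M1 M2)"

definition seg_unif :: "bid \<Rightarrow> bid \<Rightarrow> bid measure" where
  "seg_unif a b = distr (uniform_measure lborel {0..1::real}) borel (\<lambda>t. a + t *\<^sub>R (b - a))"

text \<open>The distribution with density (w.r.t. arc length) equal to the constant c on each listed
  segment [a,b]: a segment of length |b-a| with constant density c carries mass c*|b-a|,
  uniformly spread along it.\<close>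
definition seg_density_strategy :: "(real \<times> bid \<times> bid) list \<Rightarrow> bid measure" where
  "seg_density_strategy L = measure_of UNIV (sets borel)
     (\<lambda>S. \<Sum>(c, a, b)\<leftarrow>L. ennreal (c * norm (b - a)) * emeasure (seg_unif a b) S)"

end

theory Submission
  imports Defs
begin

definition hw :: "real \<Rightarrow> real \<Rightarrow> real" where
  "hw a b = (if a > b then 1 else if a < b then 0 else 1/2)"
definition U :: "bid \<Rightarrow> bid \<Rightarrow> bid \<Rightarrow> real" where
  "U w x y = (\<Sum>j\<in>UNIV. w$j * hw (x$j) (y$j) - x$j)"
definition clamp01 :: "real \<Rightarrow> real" where
  "clamp01 t = max 0 (min 1 t)"

lemma vec_nth_meas[measurable]: "(\<lambda>x::bid. x$j) \<in> borel_measurable borel"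
  by (intro borel_measurable_continuous_onI linear_continuous_on bounded_linear_vec_nth)

lemma U_meas[measurable]: "(\<lambda>p. U w (fst p) (snd p)) \<in> borel_measurable (borel \<Otimes>\<^sub>M borel)"
  unfolding U_def hw_def by measurable

lemma hw_bounds: "0 \<le> hw a b" "hw a b \<le> 1"
  by (auto simp: hw_def)

lemma inner_integral:
  assumes pf: "prob_space f" and sf: "sets f = sets borel"
    and lt: "\<And>j c. measure f {y. y$j < c} = clamp01 (c / w$j)"
    and eq: "\<And>j c. measure f {y. y$j = c} = 0"
  shows "(\<integral>y. U w x y \<partial>f) = (\<Sum>j\<in>UNIV. w$j * clamp01 (x$j / w$j) - x$j)"
proof -
  interpret prob_space f by fact
  note sf[measurable_cong]
  have sp: "space f = UNIV" using sets_eq_imp_space_eq[OF sf] by simp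
  have hwint: "integrable f (\<lambda>y. hw (x$j) (y$j))" for j
    by (rule integrable_const_bound[where B=1]) (auto simp: hw_def)
  have hwI: "(\<integral>y. hw (x$j) (y$j) \<partial>f) = clamp01 (x$j / w$j)" for j
  proof -
    have "(\<integral>y. hw (x$j) (y$j) \<partial>f) = (\<integral>y. indicator {y. y$j < x$j} y + 1/2 * indicator {y. y$j = x$j} y \<partial>f)"
      by (intro Bochner_Integration.integral_cong refl) (auto simp: hw_def indicator_def)
    also have "\<dots> = measure f {y. y$j < x$j} + 1/2 * measure f {y. y$j = x$j}"
    proof -
      have i1: "integrable f (\<lambda>y. indicator {y. y$j < x$j} y :: real)"
        by (rule integrable_const_bound[where B=1]) (auto simp: indicator_def)
      have i2: "integrable f (\<lambda>y. 1/2 * indicator {y. y$j = x$j} y :: real)"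
        by (rule integrable_const_bound[where B=1]) (auto simp: indicator_def)
      show ?thesis using Bochner_Integration.integral_add[OF i1 i2] by (simp add: sp)
    qed
    finally show ?thesis using lt eq by simp
  qed
  have "(\<integral>y. U w x y \<partial>f) = (\<Sum>j\<in>UNIV. (\<integral>y. w$j * hw (x$j) (y$j) - x$j \<partial>f))"
    unfolding U_def by (rule Bochner_Integration.integral_sum) (auto intro!: hwint)
  also have "\<dots> = (\<Sum>j\<in>UNIV. w$j * clamp01 (x$j / w$j) - x$j)"
    by (intro sum.cong refl, subst Bochner_Integration.integral_diff) (auto intro!: hwint simp: hwI prob_space)
  finally show ?thesis .
qed

lemma U_bound:
  assumes "\<forall>j. 0 \<le> x$j \<and> x$j \<le> Bd"
  shows "\<bar>U w x y\<bar> \<le> (\<Sum>j\<in>UNIV. \<bar>w$j\<bar> + Bd)"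
proof -
  have "\<bar>U w x y\<bar> \<le> (\<Sum>j\<in>UNIV. \<bar>w$j * hw (x$j) (y$j) - x$j\<bar>)"
    unfolding U_def by (rule sum_abs)
  also have "\<dots> \<le> (\<Sum>j\<in>UNIV. \<bar>w$j\<bar> + Bd)"
  proof (rule sum_mono)
    fix j :: 3
    have h: "0 \<le> hw (x$j) (y$j)" "hw (x$j) (y$j) \<le> 1" by (rule hw_bounds)+
    have "\<bar>w$j * hw (x$j) (y$j)\<bar> \<le> \<bar>w$j\<bar>"
      using h by (simp add: abs_mult mult_left_le)
    then show "\<bar>w$j * hw (x$j) (y$j) - x$j\<bar> \<le> \<bar>w$j\<bar> + Bd"
      using assms[rule_format, of j] by linarith
  qed
  finally show ?thesis .
qed

lemma pair_integral:
  assumes pf: "prob_space f" and sf: "sets f = sets borel"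
    and lt: "\<And>j c. measure f {y. y$j < c} = clamp01 (c / w$j)"
    and eq: "\<And>j c. measure f {y. y$j = c} = 0"
    and pM: "prob_space M" and sM: "sets M = sets borel"
    and bd: "AE x in M. \<forall>j. 0 \<le> x$j \<and> x$j \<le> Bd"
  shows "(\<integral>p. U w (fst p) (snd p) \<partial>(M \<Otimes>\<^sub>M f)) = (\<integral>x. (\<Sum>j\<in>UNIV. w$j * clamp01 (x$j / w$j) - x$j) \<partial>M)"
proof -
  interpret P: pair_prob_space M f by (simp add: pair_prob_space_def pair_sigma_finite_def pM pf prob_space_imp_sigma_finite)
  have sp: "sets (M \<Otimes>\<^sub>M f) = sets (borel \<Otimes>\<^sub>M borel)"
    by (rule sets_pair_measure_cong[OF sM sf])
  note [measurable_cong] = sp sM sf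
  have ae: "AE p in M \<Otimes>\<^sub>M f. \<forall>j. 0 \<le> fst p$j \<and> fst p$j \<le> Bd"
  proof (rule P.AE_pair_measure)
    show "{x \<in> space (M \<Otimes>\<^sub>M f). \<forall>j. 0 \<le> fst x $ j \<and> fst x $ j \<le> Bd} \<in> sets (M \<Otimes>\<^sub>M f)"
      by measurable
    show "AE x in M. AE y in f. \<forall>j. 0 \<le> fst (x, y) $ j \<and> fst (x, y) $ j \<le> Bd"
      using bd by eventually_elim simp
  qed
  have int: "integrable (M \<Otimes>\<^sub>M f) (\<lambda>p. U w (fst p) (snd p))"
  proof (rule P.integrable_const_bound[where B="\<Sum>j\<in>UNIV. \<bar>w$j\<bar> + Bd"])
    show "AE p in M \<Otimes>\<^sub>M f. norm (U w (fst p) (snd p)) \<le> (\<Sum>j\<in>UNIV. \<bar>w$j\<bar> + Bd)"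
      using ae by eventually_elim (simp add: U_bound)
  qed measurable
  have "(\<integral>p. U w (fst p) (snd p) \<partial>(M \<Otimes>\<^sub>M f)) = (\<integral>x. (\<integral>y. U w x y \<partial>f) \<partial>M)"
    using P.integral_fst'[OF int] by simp
  also have "\<dots> = (\<integral>x. (\<Sum>j\<in>UNIV. w$j * clamp01 (x$j / w$j) - x$j) \<partial>M)"
    by (intro Bochner_Integration.integral_cong refl inner_integral[OF pf sf lt eq])
  finally show ?thesis .
qed

lemma win1_sym:
  assumes "w \<le> B1" "w \<le> B2"
  shows "win1 B1 B2 w w a b = hw a b"
  using assms by (auto simp: win1_def hw_def min_def)

lemma util_eqs:
  assumes "\<forall>j. w$j \<le> B1 \<and> w$j \<le> B2"
  shows "util1 B1 B2 w w x y = U w x y" "util2 B1 B2 w w x y = U w y x"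
  using assms by (auto simp: util1_def util2_def U_def win1_sym hw_def intro!: sum.cong)

lemma feasible_bd:
  assumes "x \<in> feasible B"
  shows "\<forall>j. 0 \<le> x$j \<and> x$j \<le> B"
proof
  fix j :: 3
  have "x$j \<le> (\<Sum>i\<in>UNIV. x$i)"
    by (rule member_le_sum) (use assms in \<open>auto simp: feasible_def\<close>)
  then show "0 \<le> x$j \<and> x$j \<le> B" using assms by (auto simp: feasible_def)
qed

lemma g_nonpos:
  assumes "\<forall>j. 0 < w$j" "\<forall>j. 0 \<le> x$j"
  shows "(\<Sum>j\<in>UNIV. w$j * clamp01 (x$j / w$j) - x$j) \<le> 0"
proof -
  have "w$j * clamp01 (x$j / w$j) - x$j \<le> 0" for j
  proof -
    have w: "0 < w$j" and x: "0 \<le> x$j" using assms by auto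
    have "clamp01 (x$j / w$j) \<le> x$j / w$j" using w x by (auto simp: clamp01_def)
    then have "w$j * clamp01 (x$j / w$j) \<le> w$j * (x$j / w$j)" using w by (intro mult_left_mono) auto
    then show ?thesis using w by simp
  qed
  then show ?thesis by (intro sum_nonpos) auto
qed

lemma g_zero:
  assumes "\<forall>j. 0 < w$j" "\<forall>j. 0 \<le> x$j \<and> x$j \<le> w$j"
  shows "(\<Sum>j\<in>UNIV. w$j * clamp01 (x$j / w$j) - x$j) = 0"
proof -
  have "w$j * clamp01 (x$j / w$j) - x$j = 0" for j
  proof -
    have w: "0 < w$j" and x: "0 \<le> x$j" "x$j \<le> w$j" using assms by auto
    have "clamp01 (x$j / w$j) = x$j / w$j" using w x by (auto simp: clamp01_def)
    then show ?thesis using w by simp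
  qed
  then show ?thesis by simp
qed

lemma nash_abstract:
  assumes pf: "prob_space f" and sf: "sets f = sets borel"
    and lt: "\<And>j c. measure f {y. y$j < c} = clamp01 (c / w$j)"
    and eq: "\<And>j c. measure f {y. y$j = c} = 0"
    and wpos: "\<forall>j. 0 < w$j" and wB: "\<forall>j. w$j \<le> B1 \<and> w$j \<le> B2"
    and fe1: "AE y in f. y \<in> feasible B1" and fe2: "AE y in f. y \<in> feasible B2"
    and box: "AE y in f. \<forall>j. y$j \<le> w$j"
  shows "nash_eq B1 B2 w w f f"
proof -
  let ?g = "\<lambda>x::bid. (\<Sum>j\<in>UNIV. w$j * clamp01 (x$j / w$j) - x$j)"
  have gmeas: "?g \<in> borel_measurable borel" unfolding clamp01_def by measurable
  have dev: "(\<integral>p. U w (fst p) (snd p) \<partial>(M \<Otimes>\<^sub>M f)) \<le> 0"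
    if M: "mixed_strategy B M" for M B
  proof -
    have pM: "prob_space M" and sM: "sets M = sets borel" and feM: "AE x in M. x \<in> feasible B"
      using M by (auto simp: mixed_strategy_def)
    have bd: "AE x in M. \<forall>j. 0 \<le> x$j \<and> x$j \<le> B"
      using feM by eventually_elim (rule feasible_bd)
    have "0 \<le> (\<integral>x. - ?g x \<partial>M)"
      using bd by (intro integral_nonneg_AE) (auto elim!: eventually_mono intro!: g_nonpos wpos)
    then show ?thesis using pair_integral[OF pf sf lt eq pM sM bd] by simp
  qed
  have ff: "(\<integral>p. U w (fst p) (snd p) \<partial>(f \<Otimes>\<^sub>M f)) = 0"
  proof -
    have bd: "AE x in f. \<forall>j. 0 \<le> x$j \<and> x$j \<le> B1"
      using fe1 by eventually_elim (rule feasible_bd)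
    have "(\<integral>x. ?g x \<partial>f) = (\<integral>x. 0 \<partial>f)"
    proof (rule integral_cong_AE)
      show "?g \<in> borel_measurable f" by (subst measurable_cong_sets[OF sf refl]) (rule gmeas)
      show "AE x in f. ?g x = 0" using bd box by eventually_elim (intro g_zero wpos, auto)
    qed simp
    then show ?thesis using pair_integral[OF pf sf lt eq pf sf bd] by simp
  qed
  have ms1: "mixed_strategy B1 f" and ms2: "mixed_strategy B2 f"
    using pf sf fe1 fe2 by (auto simp: mixed_strategy_def)
  have swap: "(\<integral>p. U w (snd p) (fst p) \<partial>(f \<Otimes>\<^sub>M M)) = (\<integral>p. U w (fst p) (snd p) \<partial>(M \<Otimes>\<^sub>M f))"
    if M: "mixed_strategy B2 M" for M
  proof -
    have pM: "prob_space M" and sM: "sets M = sets borel" using M by (auto simp: mixed_strategy_def)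
    interpret P: pair_prob_space M f
      by (simp add: pair_prob_space_def pair_sigma_finite_def pM pf prob_space_imp_sigma_finite)
    have sp: "sets (M \<Otimes>\<^sub>M f) = sets (borel \<Otimes>\<^sub>M borel)"
      by (rule sets_pair_measure_cong[OF sM sf])
    have meas: "(\<lambda>p. U w (fst p) (snd p)) \<in> borel_measurable (M \<Otimes>\<^sub>M f)"
      by (subst measurable_cong_sets[OF sp refl]) (rule U_meas)
    show ?thesis using P.integral_product_swap[OF meas] by (simp add: case_prod_beta')
  qed
  have EU1eq: "EU1 B1 B2 w w M f = (\<integral>p. U w (fst p) (snd p) \<partial>(M \<Otimes>\<^sub>M f))" for M
    unfolding EU1_def using util_eqs(1)[OF wB] by simp
  have EU2eq: "EU2 B1 B2 w w f M = (\<integral>p. U w (snd p) (fst p) \<partial>(f \<Otimes>\<^sub>M M))" for M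
    unfolding EU2_def using util_eqs(2)[OF wB] by simp
  show ?thesis
    unfolding nash_eq_def
    using ms1 ms2 dev ff swap by (simp add: EU1eq EU2eq)
qed

lemma mlb_Iclo: "measure lborel ({0..1::real} \<inter> {..<r}) = clamp01 r"
proof (cases "r \<le> 0")
  case True
  then have "{0..1::real} \<inter> {..<r} = {}" by auto
  then show ?thesis using True by (simp add: clamp01_def)
next
  case False
  show ?thesis
  proof (cases "r \<le> 1")
    case True
    then have "{0..1::real} \<inter> {..<r} = {0..<r}" by auto
    then show ?thesis using True False by (simp add: clamp01_def measure_def)
  next
    case F2: False
    then have "{0..1::real} \<inter> {..<r} = {0..1}" by auto
    then show ?thesis using F2 by (simp add: clamp01_def measure_def)
  qed
qed

lemma mlb_Iopen: "measure lborel ({0..1::real} \<inter> {r<..}) = clamp01 (1 - r)"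
proof (cases "r \<ge> 1")
  case True
  then have "{0..1::real} \<inter> {r<..} = {}" by auto
  then show ?thesis using True by (simp add: clamp01_def)
next
  case False
  show ?thesis
  proof (cases "r \<ge> 0")
    case True
    then have "{0..1::real} \<inter> {r<..} = {r<..1}" by auto
    then show ?thesis using True False by (simp add: clamp01_def measure_def)
  next
    case F2: False
    then have "{0..1::real} \<inter> {r<..} = {0..1}" by auto
    then show ?thesis using F2 by (simp add: clamp01_def measure_def)
  qed
qed

lemma lb_lt:
  fixes p q c :: real
  assumes "p \<noteq> q"
  shows "measure lborel ({0..1} \<inter> {t. p + t * (q - p) < c}) = clamp01 ((c - min p q) / \<bar>q - p\<bar>)"
proof (cases "p < q")
  case True
  have "{t. p + t * (q - p) < c} = {..<(c - p) / (q - p)}"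
    using True by (auto simp: field_simps)
  then show ?thesis using True mlb_Iclo by simp
next
  case False
  then have pq: "q < p" using assms by auto
  have "{t. p + t * (q - p) < c} = {(p - c) / (p - q)<..}"
    using pq by (auto simp: field_simps)
  moreover have "1 - (p - c) / (p - q) = (c - q) / (p - q)"
    using pq by (simp add: field_simps)
  ultimately show ?thesis using pq mlb_Iopen by simp
qed

lemma lb_eq:
  fixes p q c :: real
  assumes "p \<noteq> q"
  shows "measure lborel ({0..1} \<inter> {t. p + t * (q - p) = c}) = 0"
proof -
  have "{t. p + t * (q - p) = c} = {(c - p) / (q - p)}"
    using assms by (auto simp: field_simps)
  then have "{0..1} \<inter> {t. p + t * (q - p) = c} \<subseteq> {(c - p) / (q - p)}" by auto
  then have "emeasure lborel ({0..1} \<inter> {t. p + t * (q - p) = c}) = 0"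
    by (metis emeasure_lborel_singleton emeasure_mono le_zero_eq sets_lborel borel_singleton sets.empty_sets)
  then show ?thesis by (simp add: measure_def)
qed

definition U01 :: "real measure" where "U01 = uniform_measure lborel {0..1::real}"

lemma U01_prob: "prob_space U01"
  unfolding U01_def by (rule prob_space_uniform_measure) auto

lemma U01_sets[simp]: "sets U01 = sets borel" and U01_space[simp]: "space U01 = UNIV"
  unfolding U01_def by auto

lemma U01_measure: "X \<in> sets borel \<Longrightarrow> measure U01 X = measure lborel ({0..1} \<inter> X)"
  unfolding U01_def by (subst measure_uniform_measure) (auto simp: measure_def)

lemma seg_meas[measurable]: "(\<lambda>t::real. a + t *\<^sub>R (b - a :: bid)) \<in> borel_measurable borel"
  by measurable

lemma seg_meas_U01[measurable]: "(\<lambda>t::real. a + t *\<^sub>R (b - a :: bid)) \<in> borel_measurable U01"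
  by (subst measurable_cong_sets[OF U01_sets refl]) (rule seg_meas)

lemma seg_unif_alt: "seg_unif a b = distr U01 borel (\<lambda>t. a + t *\<^sub>R (b - a))"
  unfolding seg_unif_def U01_def ..

lemma seg_prob: "prob_space (seg_unif a b)"
  unfolding seg_unif_alt by (rule prob_space.prob_space_distr[OF U01_prob]) simp

lemma seg_sets[simp]: "sets (seg_unif a b) = sets borel"
  unfolding seg_unif_def by simp

lemma seg_space[simp]: "space (seg_unif a b) = UNIV"
  using sets_eq_imp_space_eq[OF seg_sets[of a b]] by simp

lemma seg_lt:
  assumes "a$j \<noteq> b$j"
  shows "measure (seg_unif a b) {y. y$j < c} = clamp01 ((c - min (a$j) (b$j)) / \<bar>b$j - a$j\<bar>)"
proof -
  have "measure (seg_unif a b) {y. y$j < c} = measure U01 ((\<lambda>t. a + t *\<^sub>R (b - a)) -` {y. y$j < c})"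
    unfolding seg_unif_alt by (subst measure_distr) auto
  also have "(\<lambda>t. a + t *\<^sub>R (b - a)) -` {y. y$j < c} = {t. a$j + t * (b$j - a$j) < c}"
    by auto
  also have "measure U01 \<dots> = measure lborel ({0..1} \<inter> {t. a$j + t * (b$j - a$j) < c})"
    by (rule U01_measure) measurable
  finally show ?thesis using lb_lt[OF assms] by simp
qed

lemma seg_eq:
  assumes "a$j \<noteq> b$j"
  shows "measure (seg_unif a b) {y. y$j = c} = 0"
proof -
  have "measure (seg_unif a b) {y. y$j = c} = measure U01 ((\<lambda>t. a + t *\<^sub>R (b - a)) -` {y. y$j = c})"
    unfolding seg_unif_alt by (subst measure_distr) auto
  also have "(\<lambda>t. a + t *\<^sub>R (b - a)) -` {y. y$j = c} = {t. a$j + t * (b$j - a$j) = c}"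
    by auto
  also have "measure U01 \<dots> = measure lborel ({0..1} \<inter> {t. a$j + t * (b$j - a$j) = c})"
    by (rule U01_measure) measurable
  finally show ?thesis using lb_eq[OF assms] by simp
qed

lemma seg_AE:
  assumes P: "{y. P y} \<in> sets borel" and H: "\<And>t. 0 \<le> t \<Longrightarrow> t \<le> 1 \<Longrightarrow> P (a + t *\<^sub>R (b - a))"
  shows "AE y in seg_unif a b. P y"
  unfolding seg_unif_alt
proof (subst AE_distr_iff)
  show "{x \<in> space borel. P x} \<in> sets borel" using P by simp
  show "AE x in U01. P (a + x *\<^sub>R (b - a))"
    unfolding U01_def by (rule AE_uniform_measureI) (auto intro!: H)
qed simp

definition mu :: "(real \<times> bid \<times> bid) list \<Rightarrow> bid set \<Rightarrow> ennreal" where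
  "mu L S = (\<Sum>(c, a, b)\<leftarrow>L. ennreal (c * norm (b - a)) * emeasure (seg_unif a b) S)"

lemma mu_Nil[simp]: "mu [] S = 0" and mu_Cons[simp]: "mu ((c,a,b)#L) S = ennreal (c * norm (b - a)) * emeasure (seg_unif a b) S + mu L S"
  by (simp_all add: mu_def)

lemma mu_ca: "countably_additive (sets borel) (mu L)"
proof (induction L)
  case Nil
  then show ?case by (simp add: countably_additive_def)
next
  case (Cons x L)
  obtain c a b where x: "x = (c, a, b)" by (cases x) auto
  show ?case unfolding countably_additive_def
  proof (intro allI impI)
    fix A :: "nat \<Rightarrow> bid set"
    assume A: "range A \<subseteq> sets borel" "disjoint_family A" "\<Union> (range A) \<in> sets borel"
    have "(\<Sum>i. mu (x # L) (A i)) = (\<Sum>i. ennreal (c * norm (b - a)) * emeasure (seg_unif a b) (A i)) + (\<Sum>i. mu L (A i))"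
      unfolding x mu_Cons by (rule suminf_add[symmetric]) auto
    also have "(\<Sum>i. ennreal (c * norm (b - a)) * emeasure (seg_unif a b) (A i)) = ennreal (c * norm (b - a)) * emeasure (seg_unif a b) (\<Union>i. A i)"
      using A by (simp add: suminf_emeasure)
    also have "(\<Sum>i. mu L (A i)) = mu L (\<Union>i. A i)"
      using Cons.IH A unfolding countably_additive_def by blast
    finally show "(\<Sum>i. mu (x # L) (A i)) = mu (x # L) (\<Union> (range A))"
      unfolding x by simp
  qed
qed

lemma sds_sets[simp]: "sets (seg_density_strategy L) = sets borel"
  and sds_space[simp]: "space (seg_density_strategy L) = UNIV"
proof -
  show "sets (seg_density_strategy L) = sets borel"
    unfolding seg_density_strategy_def
    using sets.sigma_sets_eq[of borel] by (subst sets_measure_of) auto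
  show "space (seg_density_strategy L) = UNIV"
    unfolding seg_density_strategy_def by (subst space_measure_of) auto
qed

lemma sds_emeasure:
  assumes "S \<in> sets borel"
  shows "emeasure (seg_density_strategy L) S = mu L S"
proof -
  have "emeasure (measure_of UNIV (sets borel) (mu L)) S = mu L S"
  proof (rule emeasure_measure_of_sigma)
    show "sigma_algebra UNIV (sets borel)" using sets.sigma_algebra_axioms[of borel] by simp
    show "positive (sets borel) (mu L)"
      unfolding positive_def by (induction L) auto
  qed (fact mu_ca, fact assms)
  then show ?thesis unfolding seg_density_strategy_def mu_def .
qed

lemma mu_real:
  assumes "\<forall>(c, a, b)\<in>set L. 0 \<le> c"
  shows "mu L S = ennreal (\<Sum>(c, a, b)\<leftarrow>L. c * norm (b - a) * measure (seg_unif a b) S)"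
  using assms
proof (induction L)
  case Nil
  then show ?case by simp
next
  case (Cons x L)
  obtain c a b where x: "x = (c, a, b)" by (cases x) auto
  interpret prob_space "seg_unif a b" by (rule seg_prob)
  have c: "0 \<le> c" using Cons.prems x by auto
  have nn: "0 \<le> (\<Sum>(c, a, b)\<leftarrow>L. c * norm (b - a) * measure (seg_unif a b) S)"
    using Cons.prems by (intro sum_list_nonneg) (auto)
  show ?case using Cons c nn unfolding x
    by (simp add: emeasure_eq_measure ennreal_mult ennreal_plus[symmetric])
qed

lemma sds_measure:
  assumes "\<forall>(c, a, b)\<in>set L. 0 \<le> c" "S \<in> sets borel"
  shows "measure (seg_density_strategy L) S = (\<Sum>(c, a, b)\<leftarrow>L. c * norm (b - a) * measure (seg_unif a b) S)"
proof -
  have nn: "0 \<le> (\<Sum>(c, a, b)\<leftarrow>L. c * norm (b - a) * measure (seg_unif a b) S)"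
    using assms(1) by (intro sum_list_nonneg) auto
  show ?thesis unfolding measure_def[of "seg_density_strategy L"] sds_emeasure[OF assms(2)] mu_real[OF assms(1)]
    using nn by (rule enn2real_ennreal)
qed

lemma sds_prob:
  assumes "\<forall>(c, a, b)\<in>set L. 0 \<le> c" "(\<Sum>(c, a, b)\<leftarrow>L. c * norm (b - a)) = 1"
  shows "prob_space (seg_density_strategy L)"
proof (rule prob_spaceI)
  have "(\<Sum>(c, a, b)\<leftarrow>L. c * norm (b - a) * measure (seg_unif a b) UNIV) = (\<Sum>(c, a, b)\<leftarrow>L. c * norm (b - a))"
  proof (intro arg_cong[where f=sum_list] map_cong refl)
    fix x assume "x \<in> set L"
    obtain c a b where x: "x = (c, a, b)" by (cases x) auto
    interpret prob_space "seg_unif a b" by (rule seg_prob)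
    have "measure (seg_unif a b) UNIV = 1" using prob_space by (simp add: seg_space)
    then show "(case x of (c, a, b) \<Rightarrow> c * norm (b - a) * measure (seg_unif a b) UNIV) = (case x of (c, a, b) \<Rightarrow> c * norm (b - a))"
      unfolding x by simp
  qed
  then show "emeasure (seg_density_strategy L) (space (seg_density_strategy L)) = 1"
    using assms by (simp add: sds_emeasure mu_real)
qed

lemma mu_zero:
  assumes "\<forall>(c, a, b)\<in>set L. emeasure (seg_unif a b) N = 0"
  shows "mu L N = 0"
  using assms by (induction L) auto

lemma sds_AE:
  assumes P: "{y. \<not> P y} \<in> sets borel"
    and H: "\<forall>(c, a, b)\<in>set L. \<forall>t. 0 \<le> t \<and> t \<le> 1 \<longrightarrow> P (a + t *\<^sub>R (b - a))"
  shows "AE y in seg_density_strategy L. P y"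
proof (rule AE_I')
  have P': "{y. P y} \<in> sets borel"
  proof -
    have "{y. P y} = UNIV - {y. \<not> P y}" by auto
    then show ?thesis using P by auto
  qed
  have "\<forall>(c, a, b)\<in>set L. emeasure (seg_unif a b) {y. \<not> P y} = 0"
  proof (intro ballI, clarify)
    fix c a b assume "(c, a, b) \<in> set L"
    then have "AE y in seg_unif a b. P y" using H by (intro seg_AE[OF P']) auto
    then show "emeasure (seg_unif a b) {y. \<not> P y} = 0"
      using AE_iff_measurable[of "{y. \<not> P y}" "seg_unif a b" P] P by (simp add: seg_space)
  qed
  then show "{y. \<not> P y} \<in> null_sets (seg_density_strategy L)"
    using P by (simp add: null_sets_def sds_emeasure mu_zero)
qed auto

lemma mix3:
  fixes s V mf ml mh c :: real
  assumes "0 < s" "s < V" "0 \<le> mf" "0 \<le> ml" "0 \<le> mh" "mf + ml + mh = 1" "ml * (V - s) = mh * s"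
  shows "mf * clamp01 (c / V) + ml * clamp01 (c / s) + mh * clamp01 ((c - s) / (V - s)) = clamp01 (c / V)"
proof -
  have V: "0 < V" "0 < V - s" using assms by auto
  define r where "r = ml / s"
  have ml: "ml = r * s" using assms(1) by (simp add: r_def)
  have mh: "mh = r * (V - s)"
  proof -
    have "mh * s = (r * (V - s)) * s" using assms(7) ml by (simp add: algebra_simps)
    then show ?thesis using assms(1) by simp
  qed
  have mf: "mf = 1 - r * V" using assms(6) ml mh by (simp add: algebra_simps)
  consider "c \<le> 0" | "0 < c" "c \<le> s" | "s < c" "c \<le> V" | "V < c" by linarith
  then show ?thesis
  proof cases
    case 1
    then show ?thesis using assms V by (simp add: clamp01_def divide_nonpos_pos)
  next
    case 2
    then have e: "clamp01 (c / V) = c / V" "clamp01 (c / s) = c / s" "clamp01 ((c - s) / (V - s)) = 0"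
      using assms V by (auto simp: clamp01_def divide_nonpos_pos)
    have "(1 - r * V) * (c / V) + r * s * (c / s) = c / V"
      using V assms(1) by (simp add: field_simps)
    then show ?thesis using e ml mh mf by simp
  next
    case 3
    then have e: "clamp01 (c / V) = c / V" "clamp01 (c / s) = 1" "clamp01 ((c - s) / (V - s)) = (c - s) / (V - s)"
      using assms V by (auto simp: clamp01_def)
    have "(1 - r * V) * (c / V) + r * s + r * (V - s) * ((c - s) / (V - s)) = c / V"
      using V assms(1) by (simp add: field_simps)
    then show ?thesis using e ml mh mf by simp
  next
    case 4
    then have "clamp01 (c / V) = 1" "clamp01 (c / s) = 1" "clamp01 ((c - s) / (V - s)) = 1"
      using assms V by (auto simp: clamp01_def)
    then show ?thesis using assms by simp
  qed
qed

lemma conv_lo: "lo \<le> x \<Longrightarrow> lo \<le> y \<Longrightarrow> 0 \<le> t \<Longrightarrow> t \<le> (1::real) \<Longrightarrow> lo \<le> x + t * (y - x)"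
proof -
  assume a: "lo \<le> x" "lo \<le> y" "0 \<le> t" "t \<le> 1"
  have "(1 - t) * lo \<le> (1 - t) * x" using a by (intro mult_left_mono) auto
  moreover have "t * lo \<le> t * y" using a by (intro mult_left_mono) auto
  ultimately show ?thesis by (simp add: algebra_simps)
qed
lemma conv_hi: "x \<le> hi \<Longrightarrow> y \<le> hi \<Longrightarrow> 0 \<le> t \<Longrightarrow> t \<le> (1::real) \<Longrightarrow> x + t * (y - x) \<le> hi"
proof -
  assume a: "x \<le> hi" "y \<le> hi" "0 \<le> t" "t \<le> 1"
  have "(1 - t) * x \<le> (1 - t) * hi" using a by (intro mult_left_mono) auto
  moreover have "t * y \<le> t * hi" using a by (intro mult_left_mono) auto
  ultimately show ?thesis by (simp add: algebra_simps)
qed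

definition Qbox :: "bid \<Rightarrow> real \<Rightarrow> bid \<Rightarrow> bool" where
  "Qbox w Bm y \<longleftrightarrow> (\<forall>j. 0 \<le> y$j \<and> y$j \<le> w$j) \<and> (\<Sum>j\<in>UNIV. y$j) \<le> Bm"

lemma Qbox_meas: "{y. \<not> Qbox w Bm y} \<in> sets borel"
  unfolding Qbox_def by measurable

lemma Qbox_conv:
  assumes "Qbox w Bm a" "Qbox w Bm b" "0 \<le> t" "t \<le> 1"
  shows "Qbox w Bm (a + t *\<^sub>R (b - a))"
proof -
  have comp: "(a + t *\<^sub>R (b - a))$j = a$j + t * (b$j - a$j)" for j by simp
  have sum: "(\<Sum>j\<in>UNIV. (a + t *\<^sub>R (b - a))$j) = (\<Sum>j\<in>UNIV. a$j) + t * ((\<Sum>j\<in>UNIV. b$j) - (\<Sum>j\<in>UNIV. a$j))"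
    by (simp add: sum.distrib sum_distrib_left[symmetric] sum_subtractf)
  show ?thesis using assms unfolding Qbox_def comp sum
    by (auto intro!: conv_lo conv_hi)
qed

lemma seg_lt2:
  assumes "lo < hi" "(a$j = lo \<and> b$j = hi) \<or> (a$j = hi \<and> b$j = lo)"
  shows "measure (seg_unif a b) {y. y$j < c} = clamp01 ((c - lo) / (hi - lo))"
proof -
  have "a$j \<noteq> b$j" using assms by auto
  from seg_lt[OF this, of c] show ?thesis using assms by (auto simp: min_def)
qed

lemma nash_sds:
  assumes cnn: "\<forall>(c, a, b)\<in>set L. 0 \<le> c"
    and tot: "(\<Sum>(c, a, b)\<leftarrow>L. c * norm (b - a)) = 1"
    and lt: "\<And>j c. measure (seg_density_strategy L) {y. y$j < c} = clamp01 (c / w$j)"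
    and nd: "\<forall>(c, a, b)\<in>set L. \<forall>j. a$j \<noteq> b$j"
    and ends: "\<forall>(c, a, b)\<in>set L. Qbox w Bm a \<and> Qbox w Bm b"
    and wpos: "\<forall>j. 0 < w$j" and wB: "\<forall>j. w$j \<le> B1 \<and> w$j \<le> B2"
    and Bm: "Bm \<le> B1" "Bm \<le> B2"
  shows "nash_eq B1 B2 w w (seg_density_strategy L) (seg_density_strategy L)"
proof (rule nash_abstract)
  show pf: "prob_space (seg_density_strategy L)" by (rule sds_prob[OF cnn tot])
  show "sets (seg_density_strategy L) = sets borel" by simp
  show "measure (seg_density_strategy L) {y. y$j < c} = clamp01 (c / w$j)" for j c by (rule lt)
  show "measure (seg_density_strategy L) {y. y$j = c} = 0" for j c
  proof -
    have "measure (seg_density_strategy L) {y. y$j = c} = (\<Sum>(cc, a, b)\<leftarrow>L. cc * norm (b - a) * measure (seg_unif a b) {y. y$j = c})"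
      by (rule sds_measure[OF cnn]) measurable
    also have "\<dots> = (\<Sum>(cc, a, b)\<leftarrow>L. 0)"
    proof (intro arg_cong[where f=sum_list] map_cong refl)
      fix x assume "x \<in> set L"
      then show "(case x of (cc, a, b) \<Rightarrow> cc * norm (b - a) * measure (seg_unif a b) {y. y$j = c}) = (case x of (cc, a, b) \<Rightarrow> 0)"
        using nd by (cases x) (auto simp: seg_eq)
    qed
    also have "\<dots> = 0" by (induction L) auto
    finally show ?thesis .
  qed
  have ae: "AE y in seg_density_strategy L. Qbox w Bm y"
    by (rule sds_AE[OF Qbox_meas]) (use ends in \<open>auto intro!: Qbox_conv\<close>)
  have fe: "Qbox w Bm y \<Longrightarrow> y \<in> feasible B" if "Bm \<le> B" for y B
    using that by (auto simp: Qbox_def feasible_def)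
  show "AE y in seg_density_strategy L. y \<in> feasible B1"
    using ae by eventually_elim (rule fe[OF Bm(1)])
  show "AE y in seg_density_strategy L. y \<in> feasible B2"
    using ae by eventually_elim (rule fe[OF Bm(2)])
  show "AE y in seg_density_strategy L. \<forall>j. y$j \<le> w$j"
    using ae by eventually_elim (auto simp: Qbox_def)
qed (use wpos wB in auto)

lemma case2:
  fixes v1 v2 v3 B1 B2 :: real
  assumes pos: "v3 > 0" and ord: "v1 \<ge> v2" "v2 \<ge> v3"
    and bud1: "B1 \<ge> v1" and bud2: "B2 \<ge> v1"
    and z: "(v1 + v2 + v3) / 2 \<le> v1"
  shows "let A = vector [v1, 0, 0] :: bid;
           B = vector [0, v2, v3] :: bid;
           f = seg_density_strategy [(1 / norm (B - A), A, B)]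
       in nash_eq B1 B2 (vector [v1, v2, v3]) (vector [v1, v2, v3]) f f"
proof -
  define A where "A = (vector [v1, 0, 0] :: bid)"
  define B where "B = (vector [0, v2, v3] :: bid)"
  define w where "w = (vector [v1, v2, v3] :: bid)"
  define L where "L = [(1 / norm (B - A), A, B)]"
  have A: "A$1 = v1" "A$2 = 0" "A$3 = 0" by (simp_all add: A_def)
  have B: "B$1 = 0" "B$2 = v2" "B$3 = v3" by (simp_all add: B_def)
  have w: "w$1 = v1" "w$2 = v2" "w$3 = v3" by (simp_all add: w_def)
  have nAB: "norm (B - A) \<noteq> 0" using A B pos ord by (metis norm_eq_zero right_minus_eq order_less_le order_trans)
  have cnn: "\<forall>(c, a, b)\<in>set L. 0 \<le> c" by (simp add: L_def)
  have tot: "(\<Sum>(c, a, b)\<leftarrow>L. c * norm (b - a)) = 1" using nAB by (simp add: L_def)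
  have lt: "measure (seg_density_strategy L) {y. y$j < c} = clamp01 (c / w$j)" for j c
  proof -
    have "measure (seg_density_strategy L) {y. y$j < c} = measure (seg_unif A B) {y. y$j < c}"
      using nAB by (subst sds_measure[OF cnn]) (auto simp: L_def)
    also have "\<dots> = clamp01 (c / w$j)"
    proof -
      consider "j = 1" | "j = 2" | "j = 3" using exhaust_3 by blast
      then show ?thesis
      proof cases
        case 1 then show ?thesis using seg_lt2[of 0 v1 A j B c] A B w pos ord by simp
      next
        case 2 then show ?thesis using seg_lt2[of 0 v2 A j B c] A B w pos ord by simp
      next
        case 3 then show ?thesis using seg_lt2[of 0 v3 A j B c] A B w pos ord by simp
      qed
    qed
    finally show ?thesis .
  qed
  have nd: "\<forall>(c, a, b)\<in>set L. \<forall>j. a$j \<noteq> b$j"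
    using A B pos ord by (auto simp: L_def forall_3)
  have ends: "\<forall>(c, a, b)\<in>set L. Qbox w v1 a \<and> Qbox w v1 b"
    using A B w pos ord z by (auto simp: L_def Qbox_def forall_3 sum_3)
  have "nash_eq B1 B2 w w (seg_density_strategy L) (seg_density_strategy L)"
    by (rule nash_sds[OF cnn tot lt nd ends]) (use w pos ord bud1 bud2 in \<open>auto simp: forall_3\<close>)
  then show ?thesis unfolding Let_def A_def B_def L_def w_def .
qed

lemma norm_ne0: "a$j \<noteq> b$j \<Longrightarrow> norm (b - a :: bid) \<noteq> 0"
  by auto

lemma case1:
  fixes v1 v2 v3 B1 B2 z :: real
  assumes pos: "v3 > 0" and ord: "v1 \<ge> v2" "v2 \<ge> v3"
    and bud1: "B1 \<ge> z" "B1 \<ge> v1" and bud2: "B2 \<ge> z" "B2 \<ge> v1"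
    and zdef: "z = (v1 + v2 + v3) / 2" and z: "z > v1"
  shows "let A = vector [v1, 0, z - v1] :: bid;
           B = vector [z - v2, v2, 0] :: bid;
           C = vector [0, z - v3, v3] :: bid;
           K = (z - v3) / (z - v2) + 1 + (z - v3) / (z - v1);
           PAB = (1 / K) * ((z - v3) / (z - v2));
           PBC = 1 / K;
           PCA = (1 / K) * ((z - v3) / (z - v1));
           f = seg_density_strategy
                 [(PAB / norm (B - A), A, B), (PBC / norm (C - B), B, C), (PCA / norm (A - C), C, A)]
       in nash_eq B1 B2 (vector [v1, v2, v3]) (vector [v1, v2, v3]) f f"
proof -
  define A where "A = (vector [v1, 0, z - v1] :: bid)"
  define B where "B = (vector [z - v2, v2, 0] :: bid)"
  define C where "C = (vector [0, z - v3, v3] :: bid)"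
  define K where "K = (z - v3) / (z - v2) + 1 + (z - v3) / (z - v1)"
  define PAB where "PAB = (1 / K) * ((z - v3) / (z - v2))"
  define PBC where "PBC = 1 / K"
  define PCA where "PCA = (1 / K) * ((z - v3) / (z - v1))"
  define w where "w = (vector [v1, v2, v3] :: bid)"
  define L where "L = [(PAB / norm (B - A), A, B), (PBC / norm (C - B), B, C), (PCA / norm (A - C), C, A)]"
  have A: "A$1 = v1" "A$2 = 0" "A$3 = z - v1" by (simp_all add: A_def)
  have B: "B$1 = z - v2" "B$2 = v2" "B$3 = 0" by (simp_all add: B_def)
  have C: "C$1 = 0" "C$2 = z - v3" "C$3 = v3" by (simp_all add: C_def)
  have w: "w$1 = v1" "w$2 = v2" "w$3 = v3" by (simp_all add: w_def)
  have a1: "z - v1 > 0" and a2: "z - v2 > 0" and a3: "z - v3 > 0" using z ord by auto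
  have r1: "v1 - (z - v2) = z - v3" and r2: "v2 - (z - v3) = z - v1" and r3: "v3 - (z - v1) = z - v2"
    using zdef by auto
  have Kpos: "K > 0" unfolding K_def using a1 a2 a3 by (intro add_pos_pos) auto
  have nn: "0 \<le> PAB" "0 \<le> PBC" "0 \<le> PCA"
    unfolding PAB_def PBC_def PCA_def using Kpos a1 a2 a3 by auto
  have sum1: "PAB + PBC + PCA = 1"
  proof -
    have "PAB + PBC + PCA = (1 / K) * ((z - v3) / (z - v2) + 1 + (z - v3) / (z - v1))"
      unfolding PAB_def PBC_def PCA_def by (simp only: distrib_left mult_1_right)
    also have "\<dots> = 1" unfolding K_def[symmetric] using Kpos by simp
    finally show ?thesis .
  qed
  have c1: "PBC * (v1 - (z - v2)) = PAB * (z - v2)"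
    unfolding r1 PAB_def PBC_def using a2 by simp
  have c2: "PCA * (v2 - (z - v3)) = PBC * (z - v3)"
    unfolding r2 PCA_def PBC_def using a1 by simp
  have c3: "PAB * (v3 - (z - v1)) = PCA * (z - v1)"
    unfolding r3 PAB_def PCA_def using a1 a2 by simp
  have nAB: "norm (B - A) \<noteq> 0" using norm_ne0[of A 2 B] A B pos ord by simp
  have nBC: "norm (C - B) \<noteq> 0" using norm_ne0[of B 3 C] B C pos by simp
  have nCA: "norm (A - C) \<noteq> 0" using norm_ne0[of C 1 A] A C pos ord by simp
  have cnn: "\<forall>(c, a, b)\<in>set L. 0 \<le> c" using nn by (simp add: L_def)
  have tot: "(\<Sum>(c, a, b)\<leftarrow>L. c * norm (b - a)) = 1" using nAB nBC nCA sum1 by (simp add: L_def)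
  have lt: "measure (seg_density_strategy L) {y. y$j < c} = clamp01 (c / w$j)" for j c
  proof -
    have "measure (seg_density_strategy L) {y. y$j < c} =
        PAB * measure (seg_unif A B) {y. y$j < c} + PBC * measure (seg_unif B C) {y. y$j < c}
        + PCA * measure (seg_unif C A) {y. y$j < c}"
      using nAB nBC nCA by (subst sds_measure[OF cnn]) (auto simp: L_def)
    also have "\<dots> = clamp01 (c / w$j)"
    proof -
      consider "j = 1" | "j = 2" | "j = 3" using exhaust_3 by blast
      then show ?thesis
      proof cases
        case 1
        have "PCA * clamp01 (c / v1) + PBC * clamp01 (c / (z - v2)) + PAB * clamp01 ((c - (z - v2)) / (v1 - (z - v2))) = clamp01 (c / v1)"
          by (rule mix3) (use a2 r1 a3 nn sum1 c1 in auto)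
        then show ?thesis using 1 seg_lt2[of "z - v2" v1 A j B c] seg_lt2[of 0 "z - v2" B j C c] seg_lt2[of 0 v1 C j A c]
          A B C w a2 r1 a3 pos ord by (simp add: algebra_simps)
      next
        case 2
        have "PAB * clamp01 (c / v2) + PCA * clamp01 (c / (z - v3)) + PBC * clamp01 ((c - (z - v3)) / (v2 - (z - v3))) = clamp01 (c / v2)"
          by (rule mix3) (use a3 r2 a1 nn sum1 c2 in auto)
        then show ?thesis using 2 seg_lt2[of 0 v2 A j B c] seg_lt2[of "z - v3" v2 B j C c] seg_lt2[of 0 "z - v3" C j A c]
          A B C w a3 r2 a1 pos ord by (simp add: algebra_simps)
      next
        case 3
        have "PBC * clamp01 (c / v3) + PAB * clamp01 (c / (z - v1)) + PCA * clamp01 ((c - (z - v1)) / (v3 - (z - v1))) = clamp01 (c / v3)"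
          by (rule mix3) (use a1 r3 a2 nn sum1 c3 in auto)
        then show ?thesis using 3 seg_lt2[of 0 "z - v1" A j B c] seg_lt2[of 0 v3 B j C c] seg_lt2[of "z - v1" v3 C j A c]
          A B C w a1 r3 a2 pos ord by (simp add: algebra_simps)
      qed
    qed
    finally show ?thesis .
  qed
  have nd: "\<forall>(c, a, b)\<in>set L. \<forall>j. a$j \<noteq> b$j"
  proof -
    have d: "v1 \<noteq> z - v2" "0 \<noteq> v2" "z - v1 \<noteq> 0" "z - v2 \<noteq> 0" "v2 \<noteq> z - v3" "0 \<noteq> v3"
      "0 \<noteq> v1" "z - v3 \<noteq> 0" "v3 \<noteq> z - v1"
      using pos ord z zdef by auto
    show ?thesis using d by (simp add: L_def forall_3 A B C)
  qed
  have ends: "\<forall>(c, a, b)\<in>set L. Qbox w z a \<and> Qbox w z b"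
  proof -
    have d: "0 \<le> v1" "0 \<le> v2" "0 \<le> v3" "0 \<le> z - v1" "z - v1 \<le> v3" "0 \<le> z - v2" "z - v2 \<le> v1"
      "0 \<le> z - v3" "z - v3 \<le> v2"
      using pos ord z zdef by auto
    show ?thesis using d by (simp add: L_def Qbox_def forall_3 sum_3 A B C w)
  qed
  have "nash_eq B1 B2 w w (seg_density_strategy L) (seg_density_strategy L)"
    by (rule nash_sds[OF cnn tot lt nd ends]) (use w pos ord bud1 bud2 in \<open>auto simp: forall_3\<close>)
  then show ?thesis unfolding Let_def A_def B_def C_def K_def PAB_def PBC_def PCA_def L_def w_def .
qed

theorem theorem6:
  fixes v1 v2 v3 B1 B2 :: real
  assumes pos: "v3 > 0"
    and ord: "v1 \<ge> v2" "v2 \<ge> v3"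
    and bud1: "B1 \<ge> max ((v1 + v2 + v3) / 2) v1"
    and bud2: "B2 \<ge> max ((v1 + v2 + v3) / 2) v1"
  defines "z \<equiv> (v1 + v2 + v3) / 2"
    and "v \<equiv> vector [v1, v2, v3] :: bid"
  shows
    "(z > v1 \<longrightarrow>
      (let A = vector [v1, 0, z - v1] :: bid;
           B = vector [z - v2, v2, 0] :: bid;
           C = vector [0, z - v3, v3] :: bid;
           K = (z - v3) / (z - v2) + 1 + (z - v3) / (z - v1);
           PAB = (1 / K) * ((z - v3) / (z - v2));
           PBC = 1 / K;
           PCA = (1 / K) * ((z - v3) / (z - v1));
           f = seg_density_strategy
                 [(PAB / norm (B - A), A, B), (PBC / norm (C - B), B, C), (PCA / norm (A - C), C, A)]
       in nash_eq B1 B2 v v f f))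
     \<and>
     (z \<le> v1 \<longrightarrow>
      (let A = vector [v1, 0, 0] :: bid;
           B = vector [0, v2, v3] :: bid;
           f = seg_density_strategy [(1 / norm (B - A), A, B)]
       in nash_eq B1 B2 v v f f))"
proof -
  have zd: "z = (v1 + v2 + v3) / 2" unfolding z_def ..
  have b1: "B1 \<ge> z" "B1 \<ge> v1" using bud1 unfolding zd by auto
  have b2: "B2 \<ge> z" "B2 \<ge> v1" using bud2 unfolding zd by auto
  show ?thesis
  proof (intro conjI impI)
    assume zz: "z > v1"
    show "let A = vector [v1, 0, z - v1] :: bid;
           B = vector [z - v2, v2, 0] :: bid;
           C = vector [0, z - v3, v3] :: bid;
           K = (z - v3) / (z - v2) + 1 + (z - v3) / (z - v1);
           PAB = (1 / K) * ((z - v3) / (z - v2));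
           PBC = 1 / K;
           PCA = (1 / K) * ((z - v3) / (z - v1));
           f = seg_density_strategy
                 [(PAB / norm (B - A), A, B), (PBC / norm (C - B), B, C), (PCA / norm (A - C), C, A)]
       in nash_eq B1 B2 v v f f"
      unfolding v_def by (rule case1[OF pos ord b1 b2 zd zz])
  next
    assume zz: "z \<le> v1"
    show "let A = vector [v1, 0, 0] :: bid;
           B = vector [0, v2, v3] :: bid;
           f = seg_density_strategy [(1 / norm (B - A), A, B)]
       in nash_eq B1 B2 v v f f"
      unfolding v_def by (rule case2[OF pos ord b1(2) b2(2)]) (use zz zd in simp)
  qed
qed

end
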